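(* With the notation of the context (a unital partition $\mathcal{P}$ of $G=\mu_{p^n}$, $p$ odd prime, and the sets $A_{i,k}$, $B_{j,k}$ and integer $u_k$ attached to a fixed $A\in\mathcal{P}_k$ and $y\in A\cap B_k$), if $B_{j,k}\subseteq A_{i,k}$ then $j\equiv i\pmod{u_k}$.
   Context: A unital partition of a finite commutative group $G$ is a partition $G=\{1\}\sqcup A_0\sqcup\dots\sqcup A_s$ such that, with $a_i=\sum_{x\in A_i}x\in\mathbb{Z}[G]$, the $\mathbb{Z}$-span of $1$ and the $a_i$ is closed under multiplication in $\mathbb{Z}[G]$. Fix $\alpha$ an integer generating $(\mathbb{Z}/p^n\mathbb{Z})^\times$. $B_k=\{x^{p^k}\mid x\text{ a generator of }G\}$, $\mathcal{P}_k=\{A\in\mathcal{P}\mid A\cap B_k\neq\emptyset\}$. Fix $A\in\mathcal{P}_k$, $y\in A\cap B_k$; $u_k$ is the smallest positive integer with $y^{\alpha^{u_k}}\in A$, $\beta_k=\alpha^{u_k}$, $r_k+1=\phi(p^{n-k})/u_k$. For $X\subseteq G$, $X^m=\{x^m:x\in X\}$. $A_{i,k}=A^{\alpha^i}$, $B_{0,k}=\{y,y^{\beta_k},\dots,y^{\beta_k^{r_k}}\}$, $B_{i,k}=B_{0,k}^{\alpha^i}$. *)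

theory Defs
  imports Complex_Main "HOL-Number_Theory.Number_Theory"
begin

definition mu :: "nat \<Rightarrow> complex set" where
  "mu N = {z. z ^ N = 1}"

definition generators :: "nat \<Rightarrow> complex set" where
  "generators N = {z \<in> mu N. \<forall>d. 0 < d \<and> d < N \<longrightarrow> z ^ d \<noteq> 1}"

text \<open>Elements of the group ring Z[mu_N] are represented as functions
  complex => int vanishing outside mu_N; this is the group ring product.\<close>
definition grmult :: "nat \<Rightarrow> (complex \<Rightarrow> int) \<Rightarrow> (complex \<Rightarrow> int) \<Rightarrow> (complex \<Rightarrow> int)" where
  "grmult N f g = (\<lambda>z. if z \<in> mu N then (\<Sum>w\<in>mu N. f w * g (z / w)) else 0)"

text \<open>The group ring element sum_{x in S} x.\<close>
definition indic :: "complex set \<Rightarrow> complex \<Rightarrow> int" where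
  "indic S = (\<lambda>z. if z \<in> S then 1 else 0)"

definition zspan :: "complex set set \<Rightarrow> (complex \<Rightarrow> int) set" where
  "zspan P = {f. \<exists>c0 c. f = (\<lambda>z. c0 * indic {1} z + (\<Sum>A\<in>P. c A * indic A z))}"

definition unital_partition :: "nat \<Rightarrow> complex set set \<Rightarrow> bool" where
  "unital_partition N P \<longleftrightarrow>
     finite P \<and> P \<noteq> {} \<and> (\<forall>A\<in>P. A \<noteq> {}) \<and>
     (\<forall>A\<in>P. \<forall>B\<in>P. A \<noteq> B \<longrightarrow> A \<inter> B = {}) \<and>
     \<Union>P = mu N - {1} \<and>
     (\<forall>f\<in>zspan P. \<forall>g\<in>zspan P. grmult N f g \<in> zspan P)"

end

theory Submission
  imports Defs "HOL-Library.Poly_Mapping" "HOL-Computational_Algebra.Primes"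
begin

typedef cu = "{z::complex. z \<noteq> 0}" morphisms cval cabs by (rule exI[of _ 1]) simp

instantiation cu :: comm_monoid_add
begin
definition zero_cu_def: "0 = cabs 1"
definition plus_cu_def: "a + b = cabs (cval a * cval b)"
instance
proof
  fix a b c :: cu
  have nz: "cval x \<noteq> 0" for x using cval by auto
  show "a + b + c = a + (b + c)" unfolding plus_cu_def
    using nz by (simp add: cabs_inverse mult.assoc)
  show "a + b = b + a" unfolding plus_cu_def by (simp add: mult.commute)
  show "0 + a = a" unfolding plus_cu_def zero_cu_def
    by (simp add: cabs_inverse cval_inverse)
qed
end

lemma cval_nz: "cval x \<noteq> 0" using cval by auto

lemma cval_plus[simp]: "cval (a + b) = cval a * cval b"
  unfolding plus_cu_def using cval_nz by (simp add: cabs_inverse)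

lemma cval_zero[simp]: "cval 0 = 1"
  unfolding zero_cu_def by (simp add: cabs_inverse)

lemma cval_eq_iff: "cval a = cval b \<longleftrightarrow> a = b"
  by (simp add: cval_inject)

definition emb :: "(complex \<Rightarrow> int) \<Rightarrow> (cu \<Rightarrow>\<^sub>0 int)" where
  "emb f = Abs_poly_mapping (\<lambda>c. f (cval c))"

definition supp_in :: "nat \<Rightarrow> (complex \<Rightarrow> int) \<Rightarrow> bool" where
  "supp_in N f \<longleftrightarrow> (\<forall>z. f z \<noteq> 0 \<longrightarrow> z \<in> mu N)"

lemma finite_mu: "N > 0 \<Longrightarrow> finite (mu N)"
  unfolding mu_def by (rule finite_roots_unity) simp

lemma zero_notin_mu: "N > 0 \<Longrightarrow> (0::complex) \<notin> mu N"
  unfolding mu_def by (simp add: zero_power)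

lemma lookup_emb:
  assumes "N > 0" "supp_in N f"
  shows "Poly_Mapping.lookup (emb f) c = f (cval c)"
proof -
  have "{c. f (cval c) \<noteq> 0} \<subseteq> cval -` mu N" using assms(2) unfolding supp_in_def by auto
  moreover have "finite (cval -` mu N)"
    by (rule finite_vimageI[OF finite_mu[OF assms(1)]]) (simp add: inj_on_def cval_inject)
  ultimately have "finite {c. f (cval c) \<noteq> 0}" by (rule finite_subset)
  then show ?thesis unfolding emb_def using lookup_Abs_poly_mapping[of "\<lambda>c. f (cval c)"] by simp
qed

lemma mu_mult: "a \<in> mu N \<Longrightarrow> b \<in> mu N \<Longrightarrow> a * b \<in> mu N"
  unfolding mu_def by (simp add: power_mult_distrib)

lemma mu_div: "a \<in> mu N \<Longrightarrow> b \<in> mu N \<Longrightarrow> a / b \<in> mu N"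
  unfolding mu_def by (simp add: power_divide)

lemma supp_grmult: "supp_in N (grmult N f g)"
  unfolding supp_in_def grmult_def by auto

lemma emb_mult:
  assumes N: "N > 0" and f: "supp_in N f" and g: "supp_in N g"
  shows "emb (grmult N f g) = emb f * emb g"
proof (rule poly_mapping_eqI)
  fix k
  have inner: "(\<Sum>q. Poly_Mapping.lookup (emb g) q when k = l + q) = g (cval k / cval l)" for l
  proof -
    have "(\<Sum>q. Poly_Mapping.lookup (emb g) q when k = l + q) = (\<Sum>q. g (cval q) when q = cabs (cval k / cval l))"
    proof (rule arg_cong[where f=Sum_any], rule ext)
      fix q
      have "k = l + q \<longleftrightarrow> cval k = cval l * cval q" by (metis cval_plus cval_inject)
      also have "\<dots> \<longleftrightarrow> cval q = cval k / cval l" using cval_nz[of l] by (metis nonzero_mult_div_cancel_left mult.commute nonzero_eq_divide_eq)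
      also have "\<dots> \<longleftrightarrow> q = cabs (cval k / cval l)"
        using cval_nz[of k] cval_nz[of l] by (metis cabs_inverse cval_inverse divide_eq_0_iff mem_Collect_eq)
      finally show "(Poly_Mapping.lookup (emb g) q when k = l + q) = (g (cval q) when q = cabs (cval k / cval l))"
        using lookup_emb[OF N g] by simp
    qed
    also have "\<dots> = g (cval (cabs (cval k / cval l)))" by simp
    also have "\<dots> = g (cval k / cval l)" using cval_nz[of k] cval_nz[of l] by (simp add: cabs_inverse)
    finally show ?thesis .
  qed
  have fin: "finite (cval -` mu N)"
    by (rule finite_vimageI[OF finite_mu[OF N]]) (simp add: inj_on_def cval_inject)
  have img: "cval ` (cval -` mu N) = mu N"
  proof -
    have "z \<in> range cval" if "z \<in> mu N" for z
    proof -
      have "z \<noteq> 0" using that zero_notin_mu[OF N] by (auto split: if_splits)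
      then have "cval (cabs z) = z" by (simp add: cabs_inverse)
      then show ?thesis by (metis rangeI)
    qed
    then show ?thesis by auto
  qed
  have "Poly_Mapping.lookup (emb f * emb g) k = (\<Sum>l. f (cval l) * g (cval k / cval l))"
    unfolding lookup_mult lookup_emb[OF N f] inner ..
  also have "\<dots> = (\<Sum>l \<in> cval -` mu N. f (cval l) * g (cval k / cval l))"
  proof (rule Sum_any.expand_superset[OF fin])
    show "{a. f (cval a) * g (cval k / cval a) \<noteq> 0} \<subseteq> cval -` mu N"
      using f unfolding supp_in_def by auto
  qed
  also have "\<dots> = (\<Sum>w \<in> mu N. f w * g (cval k / w))"
    using sum.reindex[of cval "cval -` mu N" "\<lambda>w. f w * g (cval k / w)"] img
    by (simp add: inj_on_def cval_inject)
  also have "\<dots> = grmult N f g (cval k)"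
  proof (cases "cval k \<in> mu N")
    case True then show ?thesis unfolding grmult_def by simp
  next
    case False
    have "g (cval k / w) = 0" if "w \<in> mu N" for w
    proof (rule ccontr)
      assume "g (cval k / w) \<noteq> 0"
      then have "cval k / w \<in> mu N" using g unfolding supp_in_def by blast
      then have "(cval k / w) * w \<in> mu N" using mu_mult that by blast
      then show False using False that zero_notin_mu[OF N] by (auto split: if_splits)
    qed
    then show ?thesis using False unfolding grmult_def by simp
  qed
  finally show "Poly_Mapping.lookup (emb (grmult N f g)) k = Poly_Mapping.lookup (emb f * emb g) k"
    using lookup_emb[OF N supp_grmult] by simp
qed

lemma frob2:
  fixes x y :: "'a::comm_ring_1"
  assumes q: "prime (q::nat)"
  shows "\<exists>c. (x + y) ^ q = x ^ q + y ^ q + of_nat q * c"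
proof -
  obtain m where m: "q = Suc m" using q by (cases q) auto
  define t where "t k = of_nat (q choose k) * x ^ k * y ^ (q - k)" for k
  have dv: "q dvd (q choose Suc i)" if "i < m" for i
    using that m q by (intro dvd_choose_prime) auto
  define c where "c = (\<Sum>i<m. of_nat ((q choose Suc i) div q) * x ^ Suc i * y ^ (q - Suc i))"
  have "(x + y) ^ q = (\<Sum>k\<le>q. t k)" unfolding t_def by (rule binomial_ring)
  also have "\<dots> = (\<Sum>k\<le>m. t k) + t q" using m by simp
  also have "(\<Sum>k\<le>m. t k) = t 0 + (\<Sum>i<m. t (Suc i))" by (rule sum.atMost_shift)
  also have "(\<Sum>i<m. t (Suc i)) = of_nat q * c"
    unfolding c_def sum_distrib_left
  proof (rule sum.cong[OF refl])
    fix i assume "i \<in> {..<m}"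
    then have "q * ((q choose Suc i) div q) = q choose Suc i" using dv by auto
    then have "of_nat q * of_nat ((q choose Suc i) div q) = (of_nat (q choose Suc i) :: 'a)"
      by (metis of_nat_mult)
    then show "t (Suc i) = of_nat q * (of_nat ((q choose Suc i) div q) * x ^ Suc i * y ^ (q - Suc i))"
      unfolding t_def by (metis mult.assoc)
  qed
  finally have "(x + y) ^ q = x ^ q + y ^ q + of_nat q * c"
    unfolding t_def by (simp add: algebra_simps)
  then show ?thesis by blast
qed

lemma frob_sum:
  fixes x :: "'b \<Rightarrow> 'a::comm_ring_1"
  assumes q: "prime (q::nat)" and S: "finite S"
  shows "\<exists>c. (\<Sum>s\<in>S. x s) ^ q = (\<Sum>s\<in>S. x s ^ q) + of_nat q * c"
  using S
proof (induction S rule: finite_induct)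
  case empty
  have "q > 0" using q prime_gt_0_nat by blast
  then show ?case by (intro exI[of _ 0]) (simp add: zero_power)
next
  case (insert a S)
  then obtain c1 where c1: "(\<Sum>s\<in>S. x s) ^ q = (\<Sum>s\<in>S. x s ^ q) + of_nat q * c1" by blast
  obtain c2 where c2: "(x a + (\<Sum>s\<in>S. x s)) ^ q = x a ^ q + (\<Sum>s\<in>S. x s) ^ q + of_nat q * c2"
    using frob2[OF q] by blast
  have "(\<Sum>s\<in>insert a S. x s) ^ q = (\<Sum>s\<in>insert a S. x s ^ q) + of_nat q * (c1 + c2)"
    using insert c1 c2 by (simp add: algebra_simps)
  then show ?case by blast
qed

lemma lookup_ofnat_mult:
  "Poly_Mapping.lookup (of_nat n * c) k = int n * Poly_Mapping.lookup c k"
  by (induction n) (auto simp: distrib_right lookup_add algebra_simps)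

lemma single_pow:
  assumes "x \<noteq> 0"
  shows "Poly_Mapping.single (cabs x) (1::int) ^ m = Poly_Mapping.single (cabs (x ^ m)) 1"
proof (induction m)
  case 0
  have "cabs 1 = 0" by (simp add: zero_cu_def)
  then show ?case by simp
next
  case (Suc m)
  have "cabs x + cabs (x ^ m) = cabs (x ^ Suc m)"
    using assms by (simp add: plus_cu_def cabs_inverse)
  then show ?case using Suc by (simp add: mult_single)
qed

fun gpow :: "nat \<Rightarrow> (complex \<Rightarrow> int) \<Rightarrow> nat \<Rightarrow> (complex \<Rightarrow> int)" where
  "gpow N f 0 = indic {1}"
| "gpow N f (Suc m) = grmult N f (gpow N f m)"

lemma one_in_mu: "(1::complex) \<in> mu N" unfolding mu_def by simp

lemma supp_indic: "A \<subseteq> mu N \<Longrightarrow> supp_in N (indic A)"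
  unfolding supp_in_def indic_def by (auto split: if_splits)

lemma emb_one: assumes N: "(N::nat) > 0" shows "emb (indic {1}) = 1"
proof (rule poly_mapping_eqI)
  fix k
  have "cval k = 1 \<longleftrightarrow> k = 0" using cval_inject[of k 0] by simp
  then show "Poly_Mapping.lookup (emb (indic {1})) k = Poly_Mapping.lookup 1 k"
    using lookup_emb[OF N supp_indic[of "{1}" N]] one_in_mu[of N]
    by (simp add: lookup_one indic_def when_def)
qed

lemma supp_gpow: "supp_in N (gpow N f m)"
  by (cases m) (auto simp: supp_grmult supp_indic one_in_mu)

lemma emb_gpow:
  assumes N: "N > 0" and f: "supp_in N f"
  shows "emb (gpow N f m) = emb f ^ m"
  by (induction m) (simp_all add: emb_one[OF N] emb_mult[OF N f supp_gpow])

lemma gpow_zspan: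
  assumes P: "unital_partition N P" and f: "f \<in> zspan P"
  shows "gpow N f m \<in> zspan P"
proof (induction m)
  case 0
  show ?case unfolding zspan_def
    by (intro CollectI exI[of _ 1] exI[of _ "\<lambda>_::complex set. 0"]) simp
next
  case (Suc m)
  then show ?case using P f unfolding unital_partition_def by simp
qed

lemma indic_zspan:
  assumes P: "unital_partition N P" and A: "A \<in> P"
  shows "indic A \<in> zspan P"
proof -
  have fin: "finite P" using P unfolding unital_partition_def by blast
  have "(\<Sum>B\<in>P. (if B = A then 1 else 0) * indic B z) = indic A z" for z
  proof -
    have "(\<Sum>B\<in>P. (if B = A then 1 else 0) * indic B z) = (\<Sum>B\<in>P. if A = B then indic B z else 0)"
      by (intro sum.cong) auto
    also have "\<dots> = indic A z" using fin A by (simp add: sum.delta)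
    finally show ?thesis .
  qed
  then show ?thesis unfolding zspan_def
    by (intro CollectI exI[of _ 0] exI[of _ "\<lambda>B. if B = A then 1 else 0"]) auto
qed

lemma emb_indic:
  assumes N: "N > 0" and A: "A \<subseteq> mu N"
  shows "emb (indic A) = (\<Sum>x\<in>A. Poly_Mapping.single (cabs x) 1)"
proof (rule poly_mapping_eqI)
  fix k
  have fin: "finite A" using A finite_mu[OF N] finite_subset by blast
  have "(\<Sum>x\<in>A. Poly_Mapping.lookup (Poly_Mapping.single (cabs x) (1::int)) k)
        = (\<Sum>x\<in>A. if x = cval k then 1 else 0)"
  proof (rule sum.cong[OF refl])
    fix x assume "x \<in> A"
    then have "x \<noteq> 0" using A zero_notin_mu[OF N] by auto
    then have "cabs x = k \<longleftrightarrow> x = cval k" using cabs_inverse[of x] cval_inverse[of k] by auto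
    then show "Poly_Mapping.lookup (Poly_Mapping.single (cabs x) (1::int)) k = (if x = cval k then 1 else 0)"
      by (auto simp: lookup_single when_def cval_inverse)
  qed
  also have "\<dots> = indic A (cval k)" using fin by (simp add: sum.delta' indic_def)
  finally show "Poly_Mapping.lookup (emb (indic A)) k =
      Poly_Mapping.lookup (\<Sum>x\<in>A. Poly_Mapping.single (cabs x) 1) k"
    using lookup_emb[OF N supp_indic[OF A]] by (simp add: lookup_sum)
qed

lemma mu_pow_inj:
  assumes N: "N > 1" and cop: "coprime m N" and x: "x \<in> mu N" and y: "y \<in> mu N"
    and eq: "x ^ m = y ^ m"
  shows "x = y"
proof -
  have m0: "m \<noteq> 0"
  proof
    assume "m = 0" then have "N = 1" using cop by simp
    then show False using N by simp
  qed
  obtain a b where ab: "m * a = N * b + gcd m N" using bezout_nat[OF m0] by blast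
  then have ab1: "m * a = N * b + 1" using cop by simp
  have y0: "y \<noteq> 0" using y zero_notin_mu[of N] N by auto
  define z where "z = x / y"
  have zN: "z ^ N = 1" using x y y0 unfolding z_def mu_def by (simp add: power_divide)
  have zm: "z ^ m = 1" using eq y0 unfolding z_def by (simp add: power_divide)
  have "z = z ^ (N * b + 1)" using zN by (simp add: power_mult)
  also have "\<dots> = z ^ (m * a)" using ab1 by simp
  also have "\<dots> = 1" using zm by (simp add: power_mult)
  finally show ?thesis using y0 unfolding z_def by simp
qed

lemma mu_pow: "x \<in> mu N \<Longrightarrow> x ^ m \<in> mu N"
proof -
  assume "x \<in> mu N"
  then have "x ^ N = 1" unfolding mu_def by simp
  have "(x ^ m) ^ N = x ^ (m * N)" by (simp add: power_mult)
  also have "\<dots> = (x ^ N) ^ m" by (simp add: power_mult mult.commute)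
  finally show ?thesis using \<open>x ^ N = 1\<close> unfolding mu_def by simp
qed

lemma mu_pow_ne1:
  assumes N: "N > 1" and cop: "coprime m N" and x: "x \<in> mu N - {1}"
  shows "x ^ m \<in> mu N - {1}"
  using mu_pow_inj[OF N cop, of x 1] x mu_pow[of x N m] one_in_mu[of N] by auto

lemma up_sub:
  assumes P: "unital_partition N P" and A: "A \<in> P"
  shows "A \<subseteq> mu N - {1}"
  using P A unfolding unital_partition_def by blast

lemma schur_prime:
  assumes N: "N > 1" and P: "unital_partition N P" and A: "A \<in> P"
    and q: "prime q" and cop: "coprime q N"
    and B: "B \<in> P" and z0: "z0 \<in> B" "z0 \<in> (\<lambda>x. x ^ q) ` A" and z: "z \<in> B"
  shows "z \<in> (\<lambda>x. x ^ q) ` A"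
proof (rule ccontr)
  assume nz: "z \<notin> (\<lambda>x. x ^ q) ` A"
  define S where "S = (\<lambda>x. x ^ q) ` A"
  have N0: "N > 0" using N by simp
  have Asub: "A \<subseteq> mu N - {1}" using up_sub[OF P A] .
  have Amu: "A \<subseteq> mu N" using Asub by blast
  have finA: "finite A" using Amu finite_mu[OF N0] finite_subset by blast
  have Bsub: "B \<subseteq> mu N - {1}" using up_sub[OF P B] .
  have finP: "finite P" using P unfolding unital_partition_def by simp
  have disj: "\<forall>A\<in>P. \<forall>B\<in>P. A \<noteq> B \<longrightarrow> A \<inter> B = {}"
    using P unfolding unital_partition_def by simp
  define h where "h = gpow N (indic A) q"
  have "h \<in> zspan P" unfolding h_def by (rule gpow_zspan[OF P indic_zspan[OF P A]])
  then obtain c0 c where hc: "h = (\<lambda>z. c0 * indic {1} z + (\<Sum>B\<in>P. c B * indic B z))"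
    unfolding zspan_def by blast
  have hB: "h w = c B" if w: "w \<in> B" for w
  proof -
    have "(\<Sum>B'\<in>P. c B' * indic B' w) = (\<Sum>B'\<in>P. if B = B' then c B' else 0)"
    proof (rule sum.cong[OF refl])
      fix B' assume B': "B' \<in> P"
      show "c B' * indic B' w = (if B = B' then c B' else 0)"
        using disj B B' w by (auto simp: indic_def)
    qed
    also have "\<dots> = c B" using finP B by (simp add: sum.delta)
    finally show ?thesis using hc w Bsub by (auto simp: indic_def)
  qed
  obtain d where d: "(\<Sum>x\<in>A. Poly_Mapping.single (cabs x) (1::int)) ^ q
      = (\<Sum>x\<in>A. Poly_Mapping.single (cabs x) 1 ^ q) + of_nat q * d"
    using frob_sum[OF q finA] by blast
  have emb_h: "emb h = (\<Sum>x\<in>A. Poly_Mapping.single (cabs (x ^ q)) 1) + of_nat q * d"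
  proof -
    have "emb h = emb (indic A) ^ q"
      unfolding h_def by (rule emb_gpow[OF N0 supp_indic[OF Amu]])
    also have "\<dots> = (\<Sum>x\<in>A. Poly_Mapping.single (cabs x) 1 ^ q) + of_nat q * d"
      using emb_indic[OF N0 Amu] d by simp
    also have "(\<Sum>x\<in>A. Poly_Mapping.single (cabs x) (1::int) ^ q) = (\<Sum>x\<in>A. Poly_Mapping.single (cabs (x ^ q)) 1)"
    proof (rule sum.cong[OF refl])
      fix x assume "x \<in> A"
      then have "x \<noteq> 0" using Amu zero_notin_mu[OF N0] by auto
      then show "Poly_Mapping.single (cabs x) (1::int) ^ q = Poly_Mapping.single (cabs (x ^ q)) 1"
        by (rule single_pow)
    qed
    finally show ?thesis .
  qed
  have val: "h w = (if w \<in> S then 1 else 0) + int q * Poly_Mapping.lookup d (cabs w)"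
    if w: "w \<in> mu N" for w
  proof -
    have w0: "w \<noteq> 0" using w zero_notin_mu[OF N0] by auto
    have "h w = Poly_Mapping.lookup (emb h) (cabs w)"
      using lookup_emb[OF N0, of h "cabs w"] w0 by (simp add: h_def supp_gpow cabs_inverse)
    also have "\<dots> = (\<Sum>x\<in>A. if x ^ q = w then 1 else 0) + int q * Poly_Mapping.lookup d (cabs w)"
    proof -
      have "(\<Sum>x\<in>A. Poly_Mapping.lookup (Poly_Mapping.single (cabs (x ^ q)) (1::int)) (cabs w))
          = (\<Sum>x\<in>A. if x ^ q = w then 1 else 0)"
      proof (rule sum.cong[OF refl])
        fix x assume "x \<in> A"
        then have "x ^ q \<in> mu N" using Amu mu_pow by blast
        then have "x ^ q \<noteq> 0" using zero_notin_mu[OF N0] by metis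
        then have "cabs (x ^ q) = cabs w \<longleftrightarrow> x ^ q = w" using w0 by (simp add: cabs_inject)
        then show "Poly_Mapping.lookup (Poly_Mapping.single (cabs (x ^ q)) (1::int)) (cabs w)
            = (if x ^ q = w then 1 else 0)"
          by (auto simp add: lookup_single when_def)
      qed
      then show ?thesis unfolding emb_h by (simp add: lookup_add lookup_sum lookup_ofnat_mult)
    qed
    also have "(\<Sum>x\<in>A. if x ^ q = w then 1 else 0) = (if w \<in> S then 1 else (0::int))"
    proof (cases "w \<in> S")
      case True
      then obtain x0 where x0: "x0 \<in> A" "w = x0 ^ q" unfolding S_def by blast
      have "(\<Sum>x\<in>A. if x ^ q = w then 1 else (0::int)) = (\<Sum>x\<in>A. if x = x0 then 1 else 0)"
      proof (rule sum.cong[OF refl])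
        fix x assume "x \<in> A"
        then have "x ^ q = w \<longleftrightarrow> x = x0"
          using mu_pow_inj[OF N cop, of x x0] x0 Amu by auto
        then show "(if x ^ q = w then 1 else (0::int)) = (if x = x0 then 1 else 0)" by simp
      qed
      also have "\<dots> = 1" using finA x0 by (simp add: sum.delta')
      finally show ?thesis using True by simp
    next
      case False
      then have "\<forall>x\<in>A. x ^ q \<noteq> w" unfolding S_def by auto
      then show ?thesis using False by simp
    qed
    finally show ?thesis .
  qed
  have "c B = 1 + int q * Poly_Mapping.lookup d (cabs z0)"
    using hB[OF z0(1)] val[of z0] z0 Bsub unfolding S_def by auto
  moreover have "c B = 0 + int q * Poly_Mapping.lookup d (cabs z)"
    using hB[OF z] val[of z] z Bsub nz unfolding S_def by auto
  ultimately have "1 = int q * (Poly_Mapping.lookup d (cabs z) - Poly_Mapping.lookup d (cabs z0))"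
    by (simp add: algebra_simps)
  then have "int q dvd 1" by (rule dvdI)
  then have "q = 1" by simp
  then show False using q by simp
qed

definition UB :: "complex set set \<Rightarrow> complex set \<Rightarrow> bool" where
  "UB P X \<longleftrightarrow> (\<forall>B\<in>P. \<forall>z0 z. z0 \<in> B \<and> z0 \<in> X \<and> z \<in> B \<longrightarrow> z \<in> X)"

lemma schur_set:
  assumes N: "N > 1" and P: "unital_partition N P" and X: "X \<subseteq> mu N - {1}" and UBX: "UB P X"
    and q: "prime q" and cop: "coprime q N"
  shows "UB P ((\<lambda>x. x ^ q) ` X)"
  unfolding UB_def
proof (intro ballI allI impI)
  fix B z0 z assume B: "B \<in> P" and zz: "z0 \<in> B \<and> z0 \<in> (\<lambda>x. x ^ q) ` X \<and> z \<in> B"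
  obtain x where x: "x \<in> X" "z0 = x ^ q" using zz by blast
  have U: "\<Union>P = mu N - {1}" using P unfolding unital_partition_def by simp
  then obtain A where A: "A \<in> P" "x \<in> A" using x X by blast
  have AX: "A \<subseteq> X" using UBX A x unfolding UB_def by blast
  have "z \<in> (\<lambda>x. x ^ q) ` A"
    using schur_prime[OF N P A(1) q cop B _ _, of z0 z] x A zz by blast
  then show "z \<in> (\<lambda>x. x ^ q) ` X" using AX by blast
qed

lemma schur_gen:
  assumes N: "N > 1" and P: "unital_partition N P" and A: "A \<in> P"
  shows "coprime m N \<Longrightarrow> UB P ((\<lambda>x. x ^ m) ` A)"
proof (induction m rule: less_induct)
  case (less m)
  have disj: "\<forall>A\<in>P. \<forall>B\<in>P. A \<noteq> B \<longrightarrow> A \<inter> B = {}"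
    using P unfolding unital_partition_def by simp
  show ?case
  proof (cases "m = 1")
    case True
    have "UB P A" unfolding UB_def
    proof (intro ballI allI impI)
      fix B z0 z assume B: "B \<in> P" and zz: "z0 \<in> B \<and> z0 \<in> A \<and> z \<in> B"
      then have "A = B" using disj A by blast
      then show "z \<in> A" using zz by simp
    qed
    then show ?thesis using True by simp
  next
    case False
    then obtain q where q: "prime q" "q dvd m" using prime_factor_nat by blast
    then obtain m' where m': "m = m' * q" by (metis dvd_div_mult_self)
    have m0: "m \<noteq> 0"
    proof
      assume "m = 0" then have "N = 1" using less.prems by simp
      then show False using N by simp
    qed
    have q2: "q \<ge> 2" using q prime_ge_2_nat by blast
    have m'0: "m' > 0" using m' m0 by (cases m') auto
    have "m' * 1 < m' * q" using m'0 q2 by (intro mult_strict_left_mono) auto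
    then have lt: "m' < m" using m' by simp
    have copq: "coprime q N" and copm': "coprime m' N" using less.prems m' by auto
    have img: "(\<lambda>x. x ^ m) ` A = (\<lambda>x. x ^ q) ` ((\<lambda>x. x ^ m') ` A)"
      by (simp add: m' power_mult image_image)
    have X: "(\<lambda>x. x ^ m') ` A \<subseteq> mu N - {1}"
    proof
      fix w assume "w \<in> (\<lambda>x. x ^ m') ` A"
      then obtain x where "x \<in> A" "w = x ^ m'" by blast
      then show "w \<in> mu N - {1}"
      proof -
        assume xA: "x \<in> A" and wx: "w = x ^ m'"
        have "x \<in> mu N - {1}" using xA up_sub[OF P A] by (rule rev_subsetD)
        then show ?thesis unfolding wx by (rule mu_pow_ne1[OF N copm'])
      qed
    qed
    show ?thesis unfolding img by (rule schur_set[OF N P X less.IH[OF lt copm'] q(1) copq])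
  qed
qed

lemma powi_mu:
  assumes N: "N > 0" and x: "x \<in> mu N"
  shows "x powi k = x ^ nat (k mod int N)"
proof -
  have x0: "x \<noteq> 0" using x zero_notin_mu[OF N] by auto
  have xN: "x ^ N = 1" using x unfolding mu_def by simp
  have k: "k = int N * (k div int N) + k mod int N" by simp
  have "x powi k = x powi (int N * (k div int N)) * x powi (k mod int N)"
    by (subst k, rule power_int_add) (simp add: x0)
  also have "x powi (int N * (k div int N)) = 1"
    by (simp add: power_int_mult xN)
  also have "x powi (k mod int N) = x ^ nat (k mod int N)"
    by (rule power_int_nonneg_exp) (use N in simp)
  finally show ?thesis by simp
qed

lemma M_cop:
  assumes N: "N > 1" and a: "coprime a (int N)"
  shows "coprime (nat (a mod int N)) N"
proof -
  have "coprime (a mod int N) (int N)" using a N by simp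
  moreover have "a mod int N \<ge> 0" using N by simp
  ultimately have "coprime (int (nat (a mod int N))) (int N)" by simp
  then show ?thesis by (simp only: coprime_int_iff)
qed

lemma powi_mu_ne1:
  assumes N: "N > 1" and a: "coprime a (int N)" and x: "x \<in> mu N - {1}"
  shows "x powi a \<in> mu N - {1}"
  using powi_mu[of N x a] N x mu_pow_ne1[OF N M_cop[OF N a] x] by simp

lemma powi_mu_inj:
  assumes N: "N > 1" and a: "coprime a (int N)" and x: "x \<in> mu N" and y: "y \<in> mu N"
    and eq: "x powi a = y powi a"
  shows "x = y"
proof -
  have "x ^ nat (a mod int N) = y ^ nat (a mod int N)"
    using eq powi_mu[of N x a] powi_mu[of N y a] x y N by simp
  then show ?thesis by (rule mu_pow_inj[OF N M_cop[OF N a] x y])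
qed

lemma powi_mu_in: "N > 0 \<Longrightarrow> x \<in> mu N \<Longrightarrow> x powi a \<in> mu N"
  using powi_mu[of N x a] mu_pow by simp

lemma stab:
  assumes N: "N > 1" and P: "unital_partition N P" and A: "A \<in> P"
    and a: "coprime e (int N)" and x: "x \<in> A" and ex: "x powi e \<in> A"
  shows "(\<lambda>z. z powi e) ` A = A"
proof -
  define m where "m = nat (e mod int N)"
  have copm: "coprime m N" unfolding m_def by (rule M_cop[OF N a])
  have Asub: "A \<subseteq> mu N - {1}" by (rule up_sub[OF P A])
  have img: "(\<lambda>z. z powi e) ` A = (\<lambda>z. z ^ m) ` A"
  proof (rule image_cong[OF refl])
    fix z assume "z \<in> A" then have "z \<in> mu N" using Asub by blast
    then show "z powi e = z ^ m" unfolding m_def using N by (intro powi_mu) auto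
  qed
  have UBm: "UB P ((\<lambda>z. z ^ m) ` A)" by (rule schur_gen[OF N P A copm])
  have "x powi e \<in> (\<lambda>z. z ^ m) ` A" using x img by blast
  then have sub: "A \<subseteq> (\<lambda>z. z ^ m) ` A" using UBm A ex unfolding UB_def by blast
  have finA: "finite A" using Asub finite_mu[of N] N finite_subset by auto
  have inj: "inj_on (\<lambda>z. z ^ m) A"
  proof (rule inj_onI)
    fix u v assume "u \<in> A" "v \<in> A" "u ^ m = v ^ m"
    then show "u = v" using mu_pow_inj[OF N copm, of u v] Asub by blast
  qed
  have "card ((\<lambda>z. z ^ m) ` A) = card A" using inj by (rule card_image)
  then have "A = (\<lambda>z. z ^ m) ` A"
    using sub finA by (intro card_subset_eq) auto
  then show ?thesis using img by simp
qed

lemma powi_comp: "(x::complex) powi (\<alpha> ^ (a + b)) = (x powi (\<alpha> ^ a)) powi (\<alpha> ^ b)"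
  by (simp add: power_add power_int_mult)

theorem lemma3p8:
  fixes p n k :: nat and \<alpha> :: int and P :: "complex set set"
    and A :: "complex set" and y :: complex and i j :: nat
  assumes p: "prime p" "odd p" and n: "n \<ge> 1"
    and alpha_unit: "coprime \<alpha> (int (p ^ n))"
    and alpha_gen: "\<forall>x::int. coprime x (int (p ^ n)) \<longrightarrow> (\<exists>e::nat. [\<alpha> ^ e = x] (mod int (p ^ n)))"
    and P: "unital_partition (p ^ n) P"
    and A: "A \<in> P"
    and y: "y \<in> A \<inter> (\<lambda>x. x ^ (p ^ k)) ` generators (p ^ n)"
  defines "u \<equiv> (LEAST u::nat. 0 < u \<and> y powi (\<alpha> ^ u) \<in> A)"
  defines "\<beta> \<equiv> \<alpha> ^ u"
  defines "r \<equiv> totient (p ^ (n - k)) div u - 1"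
  defines "B0 \<equiv> {y powi (\<beta> ^ t) | t. t \<le> r}"
  assumes "(\<lambda>x. x powi (\<alpha> ^ j)) ` B0 \<subseteq> (\<lambda>x. x powi (\<alpha> ^ i)) ` A"
  shows "[j = i] (mod u)"
proof -
  define N where "N = p ^ n"
  have p2: "p \<ge> 2" using p(1) prime_ge_2_nat by blast
  have N1: "N > 1" unfolding N_def using p2 n by (intro one_less_power) auto
  have N0: "N > 0" using N1 by simp
  have P': "unital_partition N P" using P unfolding N_def .
  have cop: "coprime (\<alpha> ^ e) (int N)" for e using alpha_unit unfolding N_def by auto
  have yA: "y \<in> A" using y by blast
  have Asub: "A \<subseteq> mu N - {1}" by (rule up_sub[OF P' A])
  have ymu: "y \<in> mu N" using yA Asub by blast
  have Amu: "A \<subseteq> mu N" using Asub by blast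
  have res: "residues (int N)" unfolding residues_def using N1 by simp
  have eul: "[\<alpha> ^ totient N = 1] (mod int N)"
  proof -
    have "coprime \<alpha> (int N)" using alpha_unit unfolding N_def .
    then have "[\<alpha> ^ totient (nat (int N)) = 1] (mod int N)" by (rule residues.euler_theorem[OF res])
    then show ?thesis by simp
  qed
  have "y powi (\<alpha> ^ totient N) = y ^ nat ((\<alpha> ^ totient N) mod int N)"
    by (rule powi_mu[OF N0 ymu])
  also have "(\<alpha> ^ totient N) mod int N = 1"
    using eul N1 unfolding cong_def by simp
  finally have yphi: "y powi (\<alpha> ^ totient N) = y" by simp
  have tot: "totient N > 0" using N0 by simp
  have exu: "\<exists>u. 0 < u \<and> y powi (\<alpha> ^ u) \<in> A"
    using tot yphi yA by (intro exI[of _ "totient N"]) simp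
  have u: "0 < u" "y powi (\<alpha> ^ u) \<in> A"
    using LeastI_ex[OF exu] unfolding u_def by blast+
  have umin: "\<not> (0 < v \<and> y powi (\<alpha> ^ v) \<in> A)" if "v < u" for v
    using not_less_Least[of v "\<lambda>u. 0 < u \<and> y powi (\<alpha> ^ u) \<in> A"] that unfolding u_def by blast
  have stu: "(\<lambda>z. z powi (\<alpha> ^ u)) ` A = A"
    by (rule stab[OF N1 P' A cop yA u(2)])
  have E: "y powi (\<alpha> ^ e) \<in> A \<longleftrightarrow> u dvd e" for e
  proof (induction e rule: less_induct)
    case (less e)
    show ?case
    proof (cases "e < u")
      case True
      show ?thesis
      proof (cases "e = 0")
        case True then show ?thesis using yA by simp
      next
        case False
        then have "\<not> u dvd e" using \<open>e < u\<close> by (auto dest: dvd_imp_le)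
        moreover have "y powi (\<alpha> ^ e) \<notin> A" using umin[OF \<open>e < u\<close>] False by simp
        ultimately show ?thesis by simp
      qed
    next
      case False
      define w where "w = y powi (\<alpha> ^ (e - u))"
      have wmu: "w \<in> mu N" unfolding w_def by (rule powi_mu_in[OF N0 ymu])
      have "y powi (\<alpha> ^ e) = w powi (\<alpha> ^ u)"
        unfolding w_def using powi_comp[of y \<alpha> "e - u" u] False by simp
      moreover have "w powi (\<alpha> ^ u) \<in> A \<longleftrightarrow> w \<in> A"
      proof
        assume "w powi (\<alpha> ^ u) \<in> A"
        then have "w powi (\<alpha> ^ u) \<in> (\<lambda>z. z powi (\<alpha> ^ u)) ` A" using stu by simp
        then obtain a where a: "a \<in> A" "w powi (\<alpha> ^ u) = a powi (\<alpha> ^ u)" by blast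
        then have "w = a" using powi_mu_inj[OF N1 cop wmu, of a] Amu by blast
        then show "w \<in> A" using a by simp
      next
        assume "w \<in> A"
        then have "w powi (\<alpha> ^ u) \<in> (\<lambda>z. z powi (\<alpha> ^ u)) ` A" by blast
        then show "w powi (\<alpha> ^ u) \<in> A" using stu by simp
      qed
      moreover have "w \<in> A \<longleftrightarrow> u dvd (e - u)"
        unfolding w_def using less.IH[of "e - u"] u(1) False by simp
      moreover have "u dvd (e - u) \<longleftrightarrow> u dvd e"
        using False by (simp add: dvd_diff_nat dvd_minus_self)
      ultimately show ?thesis by simp
    qed
  qed
  have yB0: "y \<in> B0" unfolding B0_def by (intro CollectI exI[of _ 0]) simp
  then have "y powi (\<alpha> ^ j) \<in> (\<lambda>x. x powi (\<alpha> ^ i)) ` A" using assms(13) by blast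
  then obtain x where x: "x \<in> A" "y powi (\<alpha> ^ j) = x powi (\<alpha> ^ i)" by blast
  have xmu: "x \<in> mu N" using x Amu by blast
  show ?thesis
  proof (cases "i \<le> j")
    case True
    have "y powi (\<alpha> ^ j) = (y powi (\<alpha> ^ (j - i))) powi (\<alpha> ^ i)"
      using powi_comp[of y \<alpha> "j - i" i] True by simp
    then have "y powi (\<alpha> ^ (j - i)) = x"
      using x(2) powi_mu_inj[OF N1 cop[of i] powi_mu_in[OF N0 ymu, of "\<alpha> ^ (j - i)"] xmu] by simp
    then have "u dvd (j - i)" using E[of "j - i"] x(1) by simp
    then show ?thesis using True by (simp add: cong_diff_iff_cong_0_nat[symmetric] cong_0_iff)
  next
    case False
    have "x powi (\<alpha> ^ i) = (x powi (\<alpha> ^ (i - j))) powi (\<alpha> ^ j)"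
      using powi_comp[of x \<alpha> "i - j" j] False by simp
    then have "y = x powi (\<alpha> ^ (i - j))"
      using x(2) powi_mu_inj[OF N1 cop[of j] ymu powi_mu_in[OF N0 xmu, of "\<alpha> ^ (i - j)"]] by simp
    then have "y \<in> (\<lambda>z. z powi (\<alpha> ^ (i - j))) ` A" using x(1) by blast
    moreover have "(\<lambda>z. z powi (\<alpha> ^ (i - j))) ` A = A"
      by (rule stab[OF N1 P' A cop x(1)]) (use \<open>y = _\<close> yA in simp)
    ultimately have "y powi (\<alpha> ^ 0) \<in> A" using yA by simp
    have "y powi (\<alpha> ^ (i - j)) \<in> A"
    proof -
      have "y powi (\<alpha> ^ (i - j)) \<in> (\<lambda>z. z powi (\<alpha> ^ (i - j))) ` A" using yA by blast
      then show ?thesis using \<open>(\<lambda>z. z powi (\<alpha> ^ (i - j))) ` A = A\<close> by simp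
    qed
    then have "u dvd (i - j)" using E[of "i - j"] by simp
    then have "[i = j] (mod u)" using False
      by (simp add: cong_diff_iff_cong_0_nat[symmetric] cong_0_iff)
    then show ?thesis by (simp add: cong_sym_eq)
  qed
qed

end
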